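(* Let $X,Y$ be metric spaces with bounded geometry, and equip $X\times Y$ with the $\ell^\infty$ product metric. For every $q,q'\geq 1$, $\mathrm{TO}^{q+q'}_{X\times Y}(r) \lesssim \mathrm{TO}^q_X(r)\,\mathrm{TO}^{q'}_Y(r)$.
   Context: A metric space has bounded geometry if for every $R\ge r>0$ there is $C(R,r)$ such that every ball of radius $R$ is covered by $C(R,r)$ balls of radius $r$. For $Z\subseteq X$, $\mathrm{Cov}^1(Z)$ is the minimal number of closed balls of radius $1$ in $X$ covering $Z$ ($+\infty$ if none). For $Z$ with $\mathrm{Cov}^1(Z)<\infty$ and continuous $f:Z\to\mathbb R^q$, $\mathrm{Ov}(f)=\sup_{z}\mathrm{Cov}^1(f^{-1}(z))$, $\mathrm{TO}^q(Z)=\min_f\mathrm{Ov}(f)$, $\mathrm{TO}^q_X(r)=\max\{\mathrm{TO}^q(Z): Z\subseteq X,\mathrm{Cov}^1(Z)\le r\}$. $f\lesssim g$ means there is $C$ with $f(r)\le Cg(Cr)+C$ for all $r$. (The paper notes that changing to any $\ell^p$ product metric does not change $\mathrm{TO}$ up to $\simeq$.) *)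

theory Defs
  imports "HOL-Analysis.Analysis"
begin

definition bounded_geometry :: "'a set \<Rightarrow> ('a \<Rightarrow> 'a \<Rightarrow> real) \<Rightarrow> bool" where
  "bounded_geometry M d \<longleftrightarrow>
     (\<forall>R r. 0 < r \<and> r \<le> R \<longrightarrow>
        (\<exists>N::nat. \<forall>x\<in>M. \<exists>C. finite C \<and> C \<subseteq> M \<and> card C \<le> N \<and>
            Metric_space.mcball M d x R \<subseteq> (\<Union>c\<in>C. Metric_space.mcball M d c r)))"

text \<open>Cov^1(Z): minimal number of closed radius-1 balls of X covering Z (infinity if none).\<close>
definition Cov1 :: "'a set \<Rightarrow> ('a \<Rightarrow> 'a \<Rightarrow> real) \<Rightarrow> 'a set \<Rightarrow> enat" where
  "Cov1 M d Z = Inf {enat (card C) | C. finite C \<and> C \<subseteq> M \<and>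
       Z \<subseteq> (\<Union>c\<in>C. Metric_space.mcball M d c 1)}"

definition Ov :: "'a set \<Rightarrow> ('a \<Rightarrow> 'a \<Rightarrow> real) \<Rightarrow> 'a set \<Rightarrow> ('a \<Rightarrow> real^'q::finite) \<Rightarrow> enat" where
  "Ov M d Z f = (SUP z\<in>(UNIV :: (real^'q) set). Cov1 M d {x\<in>Z. f x = z})"

text \<open>TO^q(Z): minimum of Ov(f) over continuous f : Z \<rightarrow> R^q (the dimension q is CARD('q)).\<close>
definition TO :: "'q::finite itself \<Rightarrow> 'a set \<Rightarrow> ('a \<Rightarrow> 'a \<Rightarrow> real) \<Rightarrow> 'a set \<Rightarrow> enat" where
  "TO _ M d Z = (INF f\<in>{f :: 'a \<Rightarrow> real^'q.
        continuous_map (subtopology (Metric_space.mtopology M d) Z) euclidean f}. Ov M d Z f)"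

definition TO_fun :: "'q::finite itself \<Rightarrow> 'a set \<Rightarrow> ('a \<Rightarrow> 'a \<Rightarrow> real) \<Rightarrow> real \<Rightarrow> enat" where
  "TO_fun q M d r = (SUP Z\<in>{Z. Z \<subseteq> M \<and> ereal_of_enat (Cov1 M d Z) \<le> ereal r}. TO q M d Z)"

definition max_dist :: "('a \<Rightarrow> 'a \<Rightarrow> real) \<Rightarrow> ('b \<Rightarrow> 'b \<Rightarrow> real) \<Rightarrow> ('a \<times> 'b) \<Rightarrow> ('a \<times> 'b) \<Rightarrow> real" where
  "max_dist d1 d2 = (\<lambda>(x,y) (x',y'). max (d1 x x') (d2 y y'))"

definition lesssim :: "(real \<Rightarrow> ereal) \<Rightarrow> (real \<Rightarrow> ereal) \<Rightarrow> bool" where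
  "lesssim f g \<longleftrightarrow> (\<exists>C::real. C > 0 \<and> (\<forall>r. f r \<le> ereal C * g (C * r) + ereal C))"

end

theory Submission
  imports Defs
begin

lemma mcball_eq: "Metric_space M d \<Longrightarrow> Metric_space.mcball M d x r = {y. x \<in> M \<and> y \<in> M \<and> d x y \<le> r}"
  by (simp add: Metric_space.mcball_def)

lemma enat_Inf_in: "(S::enat set) \<noteq> {} \<Longrightarrow> Inf S \<in> S"
  unfolding Inf_enat_def by (auto intro: LeastI)

lemma Metric_space_max:
  assumes "Metric_space MX dX" "Metric_space MY dY"
  shows "Metric_space (MX \<times> MY) (max_dist dX dY)"
proof -
  interpret X: Metric_space MX dX by fact
  interpret Y: Metric_space MY dY by fact
  show ?thesis
    unfolding Metric_space_def max_dist_def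
    apply (intro conjI allI impI; clarsimp)
       apply (simp add: X.nonneg max.coboundedI1)
      apply (simp add: X.commute Y.commute)
     apply (metis X.nonneg X.zero Y.nonneg Y.zero max.absorb1 max.absorb2 nle_le)
    apply (smt (verit) X.triangle Y.triangle)
    done
qed

lemma Cov1_mono: "Z \<subseteq> Z' \<Longrightarrow> Cov1 M d Z \<le> Cov1 M d Z'"
  unfolding Cov1_def by (rule Inf_superset_mono) blast

lemma Cov1_empty: "Cov1 M d {} = 0"
proof -
  have "enat (card {}) \<in> {enat (card C) | C. finite C \<and> C \<subseteq> M \<and>
       {} \<subseteq> (\<Union>c\<in>C. Metric_space.mcball M d c 1)}"
    by (rule CollectI, rule exI[of _ "{}"]) simp
  then have "Cov1 M d {} \<le> enat (card {})" unfolding Cov1_def by (rule Inf_lower)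
  then show ?thesis by (simp add: enat_0)
qed

lemma Cov1_zero: "Cov1 M d Z = 0 \<Longrightarrow> Z = {}"
proof -
  assume a: "Cov1 M d Z = 0"
  let ?S = "{enat (card C) | C. finite C \<and> C \<subseteq> M \<and> Z \<subseteq> (\<Union>c\<in>C. Metric_space.mcball M d c 1)}"
  have "?S \<noteq> {}"
  proof
    assume "?S = {}"
    then have "Cov1 M d Z = \<infinity>" unfolding Cov1_def by (simp only: Inf_empty top_enat_def)
    with a show False by simp
  qed
  then have "Inf ?S \<in> ?S" by (rule enat_Inf_in)
  then obtain C where "finite C" "Z \<subseteq> (\<Union>c\<in>C. Metric_space.mcball M d c 1)" "enat (card C) = 0"
    using a unfolding Cov1_def by auto
  then show "Z = {}" by (simp add: zero_enat_def)
qed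

lemma Cov1_fst:
  assumes "Z \<subseteq> MX \<times> MY" and MX: "Metric_space MX dX" and MY: "Metric_space MY dY"
  shows "Cov1 MX dX (fst ` Z) \<le> Cov1 (MX \<times> MY) (max_dist dX dY) Z"
  unfolding Cov1_def
proof (rule Inf_mono)
  fix b assume "b \<in> {enat (card C) | C. finite C \<and> C \<subseteq> MX \<times> MY \<and>
       Z \<subseteq> (\<Union>c\<in>C. Metric_space.mcball (MX \<times> MY) (max_dist dX dY) c 1)}"
  then obtain C where C: "b = enat (card C)" "finite C" "C \<subseteq> MX \<times> MY"
    "Z \<subseteq> (\<Union>c\<in>C. Metric_space.mcball (MX \<times> MY) (max_dist dX dY) c 1)" by blast
  have cov: "fst ` Z \<subseteq> (\<Union>c\<in>fst ` C. Metric_space.mcball MX dX c 1)"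
  proof
    fix x assume "x \<in> fst ` Z"
    then obtain z where z: "z \<in> Z" "x = fst z" by blast
    then obtain c where "c \<in> C" "z \<in> Metric_space.mcball (MX \<times> MY) (max_dist dX dY) c 1"
      using C by blast
    then have "x \<in> Metric_space.mcball MX dX (fst c) 1"
      using z MX MY Metric_space_max[OF MX MY]
      by (auto simp: mcball_eq max_dist_def split: prod.splits)
    then show "x \<in> (\<Union>c\<in>fst ` C. Metric_space.mcball MX dX c 1)"
      using \<open>c \<in> C\<close> by blast
  qed
  have "card (fst ` C) \<le> card C" using C by (simp add: card_image_le)
  show "\<exists>a\<in>{enat (card C) | C. finite C \<and> C \<subseteq> MX \<and>
       fst ` Z \<subseteq> (\<Union>c\<in>C. Metric_space.mcball MX dX c 1)}. a \<le> b"
  proof (rule bexI[of _ "enat (card (fst ` C))"])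
    show "enat (card (fst ` C)) \<le> b" using C \<open>card (fst ` C) \<le> card C\<close> by simp
    have "finite (fst ` C)" "fst ` C \<subseteq> MX" using C by auto
    then show "enat (card (fst ` C)) \<in> {enat (card C) | C. finite C \<and> C \<subseteq> MX \<and>
       fst ` Z \<subseteq> (\<Union>c\<in>C. Metric_space.mcball MX dX c 1)}"
      using cov by blast
  qed
qed

lemma Cov1_snd:
  assumes "Z \<subseteq> MX \<times> MY" and MX: "Metric_space MX dX" and MY: "Metric_space MY dY"
  shows "Cov1 MY dY (snd ` Z) \<le> Cov1 (MX \<times> MY) (max_dist dX dY) Z"
  unfolding Cov1_def
proof (rule Inf_mono)
  fix b assume "b \<in> {enat (card C) | C. finite C \<and> C \<subseteq> MX \<times> MY \<and>
       Z \<subseteq> (\<Union>c\<in>C. Metric_space.mcball (MX \<times> MY) (max_dist dX dY) c 1)}"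
  then obtain C where C: "b = enat (card C)" "finite C" "C \<subseteq> MX \<times> MY"
    "Z \<subseteq> (\<Union>c\<in>C. Metric_space.mcball (MX \<times> MY) (max_dist dX dY) c 1)" by blast
  have cov: "snd ` Z \<subseteq> (\<Union>c\<in>snd ` C. Metric_space.mcball MY dY c 1)"
  proof
    fix x assume "x \<in> snd ` Z"
    then obtain z where z: "z \<in> Z" "x = snd z" by blast
    then obtain c where "c \<in> C" "z \<in> Metric_space.mcball (MX \<times> MY) (max_dist dX dY) c 1"
      using C by blast
    then have "x \<in> Metric_space.mcball MY dY (snd c) 1"
      using z MX MY Metric_space_max[OF MX MY]
      by (auto simp: mcball_eq max_dist_def split: prod.splits)
    then show "x \<in> (\<Union>c\<in>snd ` C. Metric_space.mcball MY dY c 1)"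
      using \<open>c \<in> C\<close> by blast
  qed
  have "card (snd ` C) \<le> card C" using C by (simp add: card_image_le)
  show "\<exists>a\<in>{enat (card C) | C. finite C \<and> C \<subseteq> MY \<and>
       snd ` Z \<subseteq> (\<Union>c\<in>C. Metric_space.mcball MY dY c 1)}. a \<le> b"
  proof (rule bexI[of _ "enat (card (snd ` C))"])
    show "enat (card (snd ` C)) \<le> b" using C \<open>card (snd ` C) \<le> card C\<close> by simp
    have "finite (snd ` C)" "snd ` C \<subseteq> MY" using C by auto
    then show "enat (card (snd ` C)) \<in> {enat (card C) | C. finite C \<and> C \<subseteq> MY \<and>
       snd ` Z \<subseteq> (\<Union>c\<in>C. Metric_space.mcball MY dY c 1)}"
      using cov by blast
  qed
qed

lemma Cov1_prod:
  assumes MX: "Metric_space MX dX" and MY: "Metric_space MY dY"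
  shows "Cov1 (MX \<times> MY) (max_dist dX dY) (A \<times> B) \<le> Cov1 MX dX A * Cov1 MY dY B"
proof (cases "A = {} \<or> B = {}")
  case True
  then show ?thesis by (auto simp: Cov1_empty)
next
  case False
  let ?SA = "{enat (card C) | C. finite C \<and> C \<subseteq> MX \<and> A \<subseteq> (\<Union>c\<in>C. Metric_space.mcball MX dX c 1)}"
  let ?SB = "{enat (card C) | C. finite C \<and> C \<subseteq> MY \<and> B \<subseteq> (\<Union>c\<in>C. Metric_space.mcball MY dY c 1)}"
  have nzA: "Cov1 MX dX A \<noteq> 0" using False Cov1_zero by blast
  have nzB: "Cov1 MY dY B \<noteq> 0" using False Cov1_zero by blast
  show ?thesis
  proof (cases "?SA = {} \<or> ?SB = {}")
    case True
    have "Cov1 MX dX A = \<infinity> \<or> Cov1 MY dY B = \<infinity>"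
      using True
    proof (elim disjE)
      assume "?SA = {}"
      then have "Cov1 MX dX A = \<infinity>" unfolding Cov1_def by (simp only: Inf_empty top_enat_def)
      then show ?thesis ..
    next
      assume "?SB = {}"
      then have "Cov1 MY dY B = \<infinity>" unfolding Cov1_def by (simp only: Inf_empty top_enat_def)
      then show ?thesis ..
    qed
    then have "Cov1 MX dX A * Cov1 MY dY B = \<infinity>" using nzA nzB
      by (auto simp: imult_is_infinity)
    then show ?thesis by simp
  next
    case False
    then have neA: "?SA \<noteq> {}" and neB: "?SB \<noteq> {}" by blast+
    have "Inf ?SA \<in> ?SA" using neA by (rule enat_Inf_in)
    moreover have "Inf ?SB \<in> ?SB" using neB by (rule enat_Inf_in)
    ultimately obtain C1 C2 where C1: "Cov1 MX dX A = enat (card C1)" "finite C1" "C1 \<subseteq> MX"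
        "A \<subseteq> (\<Union>c\<in>C1. Metric_space.mcball MX dX c 1)"
      and C2: "Cov1 MY dY B = enat (card C2)" "finite C2" "C2 \<subseteq> MY"
        "B \<subseteq> (\<Union>c\<in>C2. Metric_space.mcball MY dY c 1)"
      unfolding Cov1_def by auto
    have cov: "A \<times> B \<subseteq> (\<Union>c\<in>C1 \<times> C2. Metric_space.mcball (MX \<times> MY) (max_dist dX dY) c 1)"
    proof
      fix z assume "z \<in> A \<times> B"
      then obtain a b where z: "z = (a, b)" "a \<in> A" "b \<in> B" by blast
      then obtain c1 c2 where "c1 \<in> C1" "a \<in> Metric_space.mcball MX dX c1 1"
        "c2 \<in> C2" "b \<in> Metric_space.mcball MY dY c2 1" using C1 C2 by blast
      then show "z \<in> (\<Union>c\<in>C1 \<times> C2. Metric_space.mcball (MX \<times> MY) (max_dist dX dY) c 1)"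
        using z MX MY Metric_space_max[OF MX MY] \<open>c1 \<in> C1\<close> \<open>c2 \<in> C2\<close>
        by (auto simp: mcball_eq max_dist_def intro!: bexI[of _ "(c1, c2)"])
    qed
    have "enat (card (C1 \<times> C2)) \<in> {enat (card C) | C. finite C \<and> C \<subseteq> MX \<times> MY \<and>
       A \<times> B \<subseteq> (\<Union>c\<in>C. Metric_space.mcball (MX \<times> MY) (max_dist dX dY) c 1)}"
      using C1 C2 cov by blast
    then have "Cov1 (MX \<times> MY) (max_dist dX dY) (A \<times> B) \<le> enat (card (C1 \<times> C2))"
      unfolding Cov1_def by (rule Inf_lower)
    also have "\<dots> = Cov1 MX dX A * Cov1 MY dY B"
      using C1 C2 by (simp add: card_cartesian_product)
    finally show ?thesis .
  qed
qed

lemma TO_attained: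
  "\<exists>f :: 'a \<Rightarrow> real^'q::finite.
     continuous_map (subtopology (Metric_space.mtopology M d) Z) euclidean f \<and>
     Ov M d Z f = TO TYPE('q) M d Z"
proof -
  let ?S = "{f :: 'a \<Rightarrow> real^'q.
        continuous_map (subtopology (Metric_space.mtopology M d) Z) euclidean f}"
  have "(\<lambda>_. 0) \<in> ?S" by simp
  then have "Ov M d Z ` ?S \<noteq> {}" by blast
  then have "Inf (Ov M d Z ` ?S) \<in> Ov M d Z ` ?S" by (rule enat_Inf_in)
  then show ?thesis unfolding TO_def by force
qed

lemma fst_cont:
  assumes MX: "Metric_space MX dX" and MY: "Metric_space MY dY"
  shows "continuous_map (Metric_space.mtopology (MX \<times> MY) (max_dist dX dY)) (Metric_space.mtopology MX dX) fst"
proof -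
  interpret P: Metric_space "MX \<times> MY" "max_dist dX dY" by (rule Metric_space_max[OF MX MY])
  show ?thesis unfolding P.metric_continuous_map[OF MX]
  proof (intro conjI ballI allI impI)
    fix a :: "'a \<times> 'b" and e :: real assume "a \<in> MX \<times> MY" "0 < e"
    show "\<exists>\<delta>>0. \<forall>x. x \<in> MX \<times> MY \<and> max_dist dX dY a x < \<delta> \<longrightarrow> dX (fst a) (fst x) < e"
      by (rule exI[of _ e]) (auto simp: \<open>0 < e\<close> max_dist_def split: prod.splits)
  qed auto
qed

lemma snd_cont:
  assumes MX: "Metric_space MX dX" and MY: "Metric_space MY dY"
  shows "continuous_map (Metric_space.mtopology (MX \<times> MY) (max_dist dX dY)) (Metric_space.mtopology MY dY) snd"
proof -
  interpret P: Metric_space "MX \<times> MY" "max_dist dX dY" by (rule Metric_space_max[OF MX MY])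
  show ?thesis unfolding P.metric_continuous_map[OF MY]
  proof (intro conjI ballI allI impI)
    fix a :: "'a \<times> 'b" and e :: real assume "a \<in> MX \<times> MY" "0 < e"
    show "\<exists>\<delta>>0. \<forall>x. x \<in> MX \<times> MY \<and> max_dist dX dY a x < \<delta> \<longrightarrow> dY (snd a) (snd x) < e"
      by (rule exI[of _ e]) (auto simp: \<open>0 < e\<close> max_dist_def split: prod.splits)
  qed auto
qed

definition hcomb :: "(real^'q) \<times> (real^'q') \<Rightarrow> real^('q + 'q')" where
  "hcomb p = (\<chi> i. case i of Inl j \<Rightarrow> fst p $ j | Inr k \<Rightarrow> snd p $ k)"

lemma hcomb_cont: "continuous_on UNIV (hcomb :: (real^'q::finite) \<times> (real^'q'::finite) \<Rightarrow> _)"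
  unfolding hcomb_def
proof (rule continuous_on_vec_lambda)
  fix i :: "'q + 'q'"
  show "continuous_on UNIV (\<lambda>p::(real^'q) \<times> (real^'q'). case i of Inl j \<Rightarrow> fst p $ j | Inr k \<Rightarrow> snd p $ k)"
    by (cases i) (auto intro!: continuous_intros)
qed

lemma main_bound:
  assumes MX: "Metric_space MX dX" and MY: "Metric_space MY dY"
  shows "TO_fun TYPE('q::finite + 'q'::finite) (MX \<times> MY) (max_dist dX dY) r
     \<le> TO_fun TYPE('q) MX dX r * TO_fun TYPE('q') MY dY r"
  unfolding TO_fun_def[of "TYPE('q + 'q')"]
proof (rule SUP_least)
  fix Z assume "Z \<in> {Z. Z \<subseteq> MX \<times> MY \<and> ereal_of_enat (Cov1 (MX \<times> MY) (max_dist dX dY) Z) \<le> ereal r}"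
  then have Z: "Z \<subseteq> MX \<times> MY" "ereal_of_enat (Cov1 (MX \<times> MY) (max_dist dX dY) Z) \<le> ereal r" by auto
  define ZX where "ZX = fst ` Z"
  define ZY where "ZY = snd ` Z"
  have "ereal_of_enat (Cov1 MX dX ZX) \<le> ereal_of_enat (Cov1 (MX \<times> MY) (max_dist dX dY) Z)"
    unfolding ZX_def using Cov1_fst[OF Z(1) MX MY] by simp
  then have "ereal_of_enat (Cov1 MX dX ZX) \<le> ereal r" using Z(2) by (rule order_trans)
  then have "ZX \<in> {Z. Z \<subseteq> MX \<and> ereal_of_enat (Cov1 MX dX Z) \<le> ereal r}"
    using Z(1) unfolding ZX_def by auto
  then have TX: "TO TYPE('q) MX dX ZX \<le> TO_fun TYPE('q) MX dX r"
    unfolding TO_fun_def by (rule SUP_upper)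
  have "ereal_of_enat (Cov1 MY dY ZY) \<le> ereal_of_enat (Cov1 (MX \<times> MY) (max_dist dX dY) Z)"
    unfolding ZY_def using Cov1_snd[OF Z(1) MX MY] by simp
  then have "ereal_of_enat (Cov1 MY dY ZY) \<le> ereal r" using Z(2) by (rule order_trans)
  then have "ZY \<in> {Z. Z \<subseteq> MY \<and> ereal_of_enat (Cov1 MY dY Z) \<le> ereal r}"
    using Z(1) unfolding ZY_def by auto
  then have TY: "TO TYPE('q') MY dY ZY \<le> TO_fun TYPE('q') MY dY r"
    unfolding TO_fun_def by (rule SUP_upper)
  obtain f :: "'a \<Rightarrow> real^'q" where f: "continuous_map (subtopology (Metric_space.mtopology MX dX) ZX) euclidean f"
    "Ov MX dX ZX f = TO TYPE('q) MX dX ZX" using TO_attained by blast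
  obtain g :: "'b \<Rightarrow> real^'q'" where g: "continuous_map (subtopology (Metric_space.mtopology MY dY) ZY) euclidean g"
    "Ov MY dY ZY g = TO TYPE('q') MY dY ZY" using TO_attained by blast
  define F where "F = (\<lambda>x. hcomb (f (fst x), g (snd x)))"
  let ?T = "subtopology (Metric_space.mtopology (MX \<times> MY) (max_dist dX dY)) Z"
  have "continuous_map ?T (subtopology (Metric_space.mtopology MX dX) ZX) fst"
    by (rule continuous_map_into_subtopology[OF continuous_map_from_subtopology[OF fst_cont[OF MX MY]]])
      (auto simp: ZX_def)
  from continuous_map_compose[OF this f(1)]
  have c1: "continuous_map ?T euclidean (\<lambda>x. f (fst x))" by (simp add: o_def)
  have "continuous_map ?T (subtopology (Metric_space.mtopology MY dY) ZY) snd"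
    by (rule continuous_map_into_subtopology[OF continuous_map_from_subtopology[OF snd_cont[OF MX MY]]])
      (auto simp: ZY_def)
  from continuous_map_compose[OF this g(1)]
  have c2: "continuous_map ?T euclidean (\<lambda>x. g (snd x))" by (simp add: o_def)
  have "continuous_map ?T euclidean (\<lambda>x. (f (fst x), g (snd x)))"
    using continuous_map_pairedI[OF c1 c2] by simp
  from continuous_map_compose[OF this, of euclidean hcomb]
  have contF: "continuous_map ?T euclidean F"
    using hcomb_cont by (simp add: o_def F_def)
  have "TO TYPE('q + 'q') (MX \<times> MY) (max_dist dX dY) Z \<le> Ov (MX \<times> MY) (max_dist dX dY) Z F"
    unfolding TO_def by (rule INF_lower) (simp add: contF)
  also have "\<dots> \<le> Ov MX dX ZX f * Ov MY dY ZY g"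
    unfolding Ov_def[of _ _ Z]
  proof (rule SUP_least)
    fix v :: "real^('q + 'q')"
    define vX where "vX = (\<chi> j. v $ Inl j :: real^'q)"
    define vY where "vY = (\<chi> k. v $ Inr k :: real^'q')"
    have sub: "{x \<in> Z. F x = v} \<subseteq> {a \<in> ZX. f a = vX} \<times> {b \<in> ZY. g b = vY}"
    proof
      fix x assume "x \<in> {x \<in> Z. F x = v}"
      then have x: "x \<in> Z" "F x = v" by auto
      have "vX = (\<chi> j. F x $ Inl j)" "vY = (\<chi> j. F x $ Inr j)" using x(2) vX_def vY_def by simp_all
      then have "f (fst x) = vX" "g (snd x) = vY" by (simp_all add: vec_eq_iff F_def hcomb_def)
      then show "x \<in> {a \<in> ZX. f a = vX} \<times> {b \<in> ZY. g b = vY}"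
        using x(1) by (auto simp: ZX_def ZY_def mem_Times_iff)
    qed
    have "Cov1 (MX \<times> MY) (max_dist dX dY) {x \<in> Z. F x = v}
        \<le> Cov1 (MX \<times> MY) (max_dist dX dY) ({a \<in> ZX. f a = vX} \<times> {b \<in> ZY. g b = vY})"
      by (rule Cov1_mono[OF sub])
    also have "\<dots> \<le> Cov1 MX dX {a \<in> ZX. f a = vX} * Cov1 MY dY {b \<in> ZY. g b = vY}"
      by (rule Cov1_prod[OF MX MY])
    also have "\<dots> \<le> Ov MX dX ZX f * Ov MY dY ZY g"
      unfolding Ov_def by (intro mult_mono SUP_upper) auto
    finally show "Cov1 (MX \<times> MY) (max_dist dX dY) {x \<in> Z. F x = v} \<le> Ov MX dX ZX f * Ov MY dY ZY g" .
  qed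
  also have "\<dots> \<le> TO_fun TYPE('q) MX dX r * TO_fun TYPE('q') MY dY r"
    using f(2) g(2) TX TY by (intro mult_mono) auto
  finally show "TO TYPE('q + 'q') (MX \<times> MY) (max_dist dX dY) Z
     \<le> TO_fun TYPE('q) MX dX r * TO_fun TYPE('q') MY dY r" .
qed

theorem theorem1p8:
  fixes MX :: "'a set" and dX :: "'a \<Rightarrow> 'a \<Rightarrow> real"
    and MY :: "'b set" and dY :: "'b \<Rightarrow> 'b \<Rightarrow> real"
  assumes "Metric_space MX dX" and "Metric_space MY dY"
    and "bounded_geometry MX dX" and "bounded_geometry MY dY"
  shows "lesssim
     (\<lambda>r. ereal_of_enat (TO_fun TYPE('q::finite + 'q'::finite) (MX \<times> MY) (max_dist dX dY) r))
     (\<lambda>r. ereal_of_enat (TO_fun TYPE('q) MX dX r) * ereal_of_enat (TO_fun TYPE('q') MY dY r))"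
  unfolding lesssim_def
proof (intro exI[of _ 1] conjI allI)
  fix r :: real
  have le1: "y \<le> ereal 1 * y + ereal 1" if "0 \<le> y" for y :: ereal
    using that by (cases y) auto
  have "ereal_of_enat (TO_fun TYPE('q + 'q') (MX \<times> MY) (max_dist dX dY) r)
      \<le> ereal_of_enat (TO_fun TYPE('q) MX dX r * TO_fun TYPE('q') MY dY r)"
    using main_bound[OF assms(1,2)] by simp
  also have "\<dots> = ereal_of_enat (TO_fun TYPE('q) MX dX (1 * r)) * ereal_of_enat (TO_fun TYPE('q') MY dY (1 * r))"
    by (simp add: ereal_of_enat_mult)
  also have "\<dots> \<le> ereal 1 * (ereal_of_enat (TO_fun TYPE('q) MX dX (1 * r)) * ereal_of_enat (TO_fun TYPE('q') MY dY (1 * r))) + ereal 1"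
    by (rule le1) simp
  finally show "ereal_of_enat (TO_fun TYPE('q + 'q') (MX \<times> MY) (max_dist dX dY) r)
      \<le> ereal 1 * (ereal_of_enat (TO_fun TYPE('q) MX dX (1 * r)) * ereal_of_enat (TO_fun TYPE('q') MY dY (1 * r))) + ereal 1" .
qed simp

end
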